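(* Let $X\sim\mathsf{Bernoulli}(p)$ (i.e. $\Pr(X=1)=p$) with $p\in[\frac12,1)$, and let $Y\in\{0,1\}$ be obtained from $X$ through the binary channel $P_{Y|X}=\mathsf{BIBO}(\alpha,\beta)$, i.e. $P_{Y|X}(\cdot|0)=(\bar\alpha,\alpha)$ and $P_{Y|X}(\cdot|1)=(\beta,\bar\beta)$, with $\alpha,\beta\in[0,\frac12)$ and $\bar\alpha\bar p>\beta p$. Let $q=\Pr(Y=1)=\alpha\bar p+\bar\beta p$ and for $\varepsilon$ define $$\zeta(\varepsilon)=\frac{\bar\alpha\bar p+\bar\beta p-\varepsilon}{\bar\beta p-\alpha\bar p},\qquad \tilde\zeta(\varepsilon)=\frac{\bar\alpha\bar p+\bar\beta p-\varepsilon}{\bar\alpha\bar p-\beta p}.$$ Then for every $\varepsilon\in[p,\bar\alpha\bar p+\bar\beta p]=[\mathsf{P}_{\mathsf{c}}(X),\mathsf{P}_{\mathsf{c}}(X|Y)]$, $$\mathcal{h}(\varepsilon)=\begin{cases}1-\zeta(\varepsilon)q, & \alpha\bar\alpha\bar p^2<\beta\bar\beta p^2,\\ 1-\tilde\zeta(\varepsilon)\bar q, & \alpha\bar\alpha\bar p^2\ge\beta\bar\beta p^2.\end{cases}$$ Furthermore, when $\alpha\bar\alpha\bar p^2<\beta\bar\beta p^2$ the Z-channel $P_{Z|Y}$ on $\{0,1\}$ given by $P_{Z|Y}(0|0)=1$, $P_{Z|Y}(0|1)=\zeta(\varepsilon)$, $P_{Z|Y}(1|1)=1-\zeta(\varepsilon)$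 achieves $\mathcal{h}(\varepsilon)$ (i.e. satisfies $\mathsf{P}_{\mathsf{c}}(X|Z)\le\varepsilon$ and $\mathsf{P}_{\mathsf{c}}(Y|Z)=\mathcal{h}(\varepsilon)$), and when $\alpha\bar\alpha\bar p^2\ge\beta\bar\beta p^2$ the reverse Z-channel $P_{Z|Y}(0|0)=1-\tilde\zeta(\varepsilon)$, $P_{Z|Y}(1|0)=\tilde\zeta(\varepsilon)$, $P_{Z|Y}(1|1)=1$ achieves $\mathcal{h}(\varepsilon)$.
   Context: For $a\in[0,1]$, $\bar a=1-a$. For discrete random variables, $\mathsf{P}_{\mathsf{c}}(X)=\max_x P_X(x)$ and $\mathsf{P}_{\mathsf{c}}(X|Z)=\sum_z\max_x P_{XZ}(x,z)$. The privacy-constrained guessing function is $\mathcal{h}(\varepsilon)=\sup\{\mathsf{P}_{\mathsf{c}}(Y|Z): P_{Z|Y},\ X - Y - Z,\ \mathsf{P}_{\mathsf{c}}(X|Z)\le\varepsilon\}$, the supremum being over all channels $P_{Z|Y}$ into finite alphabets with $X - Y - Z$ a Markov chain. *)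

theory Defs
  imports Complex_Main
begin

text \<open>Alphabets: X and Y take values in {0,1} (value 1 means "X=1"); a channel
P_{Z|Y} into a finite alphabet is represented, up to relabelling, as a
row-stochastic kernel W y z with output alphabet {0..<n}.\<close>

definition PXY :: "real \<Rightarrow> real \<Rightarrow> real \<Rightarrow> nat \<Rightarrow> nat \<Rightarrow> real" where
  "PXY p a b x y =
     (if x = 1 then p else 1 - p) *
     (if x = 0 then (if y = 0 then 1 - a else a) else (if y = 0 then b else 1 - b))"

definition is_channel :: "nat \<Rightarrow> (nat \<Rightarrow> nat \<Rightarrow> real) \<Rightarrow> bool" where
  "is_channel n W \<longleftrightarrow> (\<forall>y\<in>{0::nat,1}. (\<forall>z<n. 0 \<le> W y z) \<and> (\<Sum>z<n. W y z) = 1)"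

definition Pc_XZ :: "real \<Rightarrow> real \<Rightarrow> real \<Rightarrow> nat \<Rightarrow> (nat \<Rightarrow> nat \<Rightarrow> real) \<Rightarrow> real" where
  "Pc_XZ p a b n W = (\<Sum>z<n. Max ((\<lambda>x. \<Sum>y\<in>{0::nat,1}. PXY p a b x y * W y z) ` {0::nat,1}))"

definition Pc_YZ :: "real \<Rightarrow> real \<Rightarrow> real \<Rightarrow> nat \<Rightarrow> (nat \<Rightarrow> nat \<Rightarrow> real) \<Rightarrow> real" where
  "Pc_YZ p a b n W = (\<Sum>z<n. Max ((\<lambda>y. \<Sum>x\<in>{0::nat,1}. PXY p a b x y * W y z) ` {0::nat,1}))"

definition hfun :: "real \<Rightarrow> real \<Rightarrow> real \<Rightarrow> real \<Rightarrow> real" where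
  "hfun p a b eps = Sup {Pc_YZ p a b n W | n W. is_channel n W \<and> Pc_XZ p a b n W \<le> eps}"

end

theory Submission
  imports Defs
begin


lemma PcYZ_eq: "Pc_YZ p a b n W = (\<Sum>z<n. max (W 0 z * ((1-p)*(1-a) + p*b)) (W 1 z * ((1-p)*a + p*(1-b))))"
  unfolding Pc_YZ_def PXY_def by (intro sum.cong refl) (simp add: algebra_simps)

lemma PcXZ_eq: "Pc_XZ p a b n W = (\<Sum>z<n. max ((1-p)*(1-a) * W 0 z + (1-p)*a * W 1 z) (p*b * W 0 z + p*(1-b) * W 1 z))"
  unfolding Pc_XZ_def PXY_def by (intro sum.cong refl) (simp add: algebra_simps)

lemma pt1:
  fixes A0 A1 B0 B1 s t :: real
  assumes "0 \<le> A0" "0 \<le> A1" "0 \<le> B0" "0 \<le> B1" "0 \<le> s" "0 \<le> t" "A1 < B1"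
    and K: "(A1+B1)*(A0-B0) \<le> (B1-A1)*(A0+B0)"
  shows "(B1-A1) * max (s*(A0+B0)) (t*(A1+B1)) \<le> (A1+B1) * max (A0*s + A1*t) (B0*s+B1*t)
           + ((B1-A1)*(A0+B0) - (A1+B1)*A0)*s - (A1+B1)*A1*t"
proof -
  have q: "0 \<le> A1+B1" using assms by linarith
  have h1: "(A1+B1) * (A0*s + A1*t) \<le> (A1+B1) * max (A0*s + A1*t) (B0*s+B1*t)"
    using q by (intro mult_left_mono) auto
  have h2: "(A1+B1) * (B0*s + B1*t) \<le> (A1+B1) * max (A0*s + A1*t) (B0*s+B1*t)"
    using q by (intro mult_left_mono) auto
  have sK: "0 \<le> s * ((B1-A1)*(A0+B0) - (A1+B1)*(A0-B0))"
    using K assms by simp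
  show ?thesis
  proof (cases "s*(A0+B0) \<le> t*(A1+B1)")
    case True
    then have e: "max (s*(A0+B0)) (t*(A1+B1)) = t*(A1+B1)" by simp
    have "(B1-A1)*(t*(A1+B1)) \<le> (A1+B1) * (B0*s + B1*t)
           + ((B1-A1)*(A0+B0) - (A1+B1)*A0)*s - (A1+B1)*A1*t"
      using sK by (simp add: algebra_simps)
    then show ?thesis unfolding e using h2 by linarith
  next
    case False
    then have e: "max (s*(A0+B0)) (t*(A1+B1)) = s*(A0+B0)" by simp
    have "(B1-A1)*(s*(A0+B0)) = (A1+B1) * (A0*s + A1*t)
           + ((B1-A1)*(A0+B0) - (A1+B1)*A0)*s - (A1+B1)*A1*t"
      by (simp add: algebra_simps)
    then show ?thesis unfolding e using h1 by linarith
  qed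
qed

lemma pt2:
  fixes A0 A1 B0 B1 s t :: real
  assumes "0 \<le> A0" "0 \<le> A1" "0 \<le> B0" "0 \<le> B1" "0 \<le> s" "0 \<le> t" "B0 < A0"
    and K: "(A0+B0)*(B1-A1) \<le> (A0-B0)*(A1+B1)"
  shows "(A0-B0) * max (s*(A0+B0)) (t*(A1+B1)) \<le> (A0+B0) * max (A0*s + A1*t) (B0*s+B1*t)
           - (A0+B0)*B0*s + ((A0-B0)*(A1+B1) - (A0+B0)*B1)*t"
proof -
  have q: "0 \<le> A0+B0" using assms by linarith
  have h1: "(A0+B0) * (A0*s + A1*t) \<le> (A0+B0) * max (A0*s + A1*t) (B0*s+B1*t)"
    using q by (intro mult_left_mono) auto
  have h2: "(A0+B0) * (B0*s + B1*t) \<le> (A0+B0) * max (A0*s + A1*t) (B0*s+B1*t)"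
    using q by (intro mult_left_mono) auto
  have tK: "0 \<le> t * ((A0-B0)*(A1+B1) - (A0+B0)*(B1-A1))"
    using K assms by simp
  show ?thesis
  proof (cases "s*(A0+B0) \<le> t*(A1+B1)")
    case True
    then have e: "max (s*(A0+B0)) (t*(A1+B1)) = t*(A1+B1)" by simp
    have "(A0-B0)*(t*(A1+B1)) = (A0+B0) * (B0*s + B1*t)
           - (A0+B0)*B0*s + ((A0-B0)*(A1+B1) - (A0+B0)*B1)*t"
      by (simp add: algebra_simps)
    then show ?thesis unfolding e using h2 by linarith
  next
    case False
    then have e: "max (s*(A0+B0)) (t*(A1+B1)) = s*(A0+B0)" by simp
    have "(A0-B0)*(s*(A0+B0)) \<le> (A0+B0) * (A0*s + A1*t)
           - (A0+B0)*B0*s + ((A0-B0)*(A1+B1) - (A0+B0)*B1)*t"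
      using tK by (simp add: algebra_simps)
    then show ?thesis unfolding e using h1 by linarith
  qed
qed


lemma chan_facts:
  assumes "is_channel n W"
  shows "\<And>z. z < n \<Longrightarrow> 0 \<le> W 0 z" "\<And>z. z < n \<Longrightarrow> 0 \<le> W 1 z"
    "(\<Sum>z<n. W 0 z) = 1" "(\<Sum>z<n. W 1 z) = 1"
  using assms unfolding is_channel_def by auto

lemma ub1:
  fixes p a b e :: real
  assumes "1/2 \<le> p" "p < 1" "0 \<le> a" "a < 1/2" "0 \<le> b" "b < 1/2"
    and "(1 - a) * (1 - p) > b * p"
    and C: "a * (1 - a) * (1 - p)^2 < b * (1 - b) * p^2"
    and ch: "is_channel n W" and X: "Pc_XZ p a b n W \<le> e"
  shows "Pc_YZ p a b n W \<le> 1 - ((1 - a) * (1 - p) + (1 - b) * p - e) / ((1 - b) * p - a * (1 - p)) * (a * (1 - p) + (1 - b) * p)"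
proof -
  define A0 where "A0 = (1-p)*(1-a)"
  define A1 where "A1 = (1-p)*a"
  define B0 where "B0 = p*b"
  define B1 where "B1 = p*(1-b)"
  have nn: "0 \<le> A0" "0 \<le> A1" "0 \<le> B0" "0 \<le> B1" using assms unfolding A0_def A1_def B0_def B1_def by auto
  have A1a: "A1 \<le> 1/4"
  proof -
    have "(1-p)*a \<le> (1/2)*(1/2)" using assms by (intro mult_mono) auto
    then show ?thesis unfolding A1_def by simp
  qed
  have B1a: "B1 > 1/4"
  proof -
    have "(1/2)*(1/2) < p*(1-b)" using assms by (intro mult_le_less_imp_less) auto
    then show ?thesis unfolding B1_def by simp
  qed
  have D: "A1 < B1" using A1a B1a by linarith
  have K: "(A1+B1)*(A0-B0) \<le> (B1-A1)*(A0+B0)"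
  proof -
    have "(B1-A1)*(A0+B0) - (A1+B1)*(A0-B0) = 2*(B0*B1 - A0*A1)" by (simp add: algebra_simps)
    moreover have "A0*A1 = a * (1 - a) * (1 - p)^2" "B0*B1 = b * (1 - b) * p^2"
      unfolding A0_def A1_def B0_def B1_def by (simp_all add: power2_eq_square algebra_simps)
    ultimately have "0 \<le> (B1-A1)*(A0+B0) - (A1+B1)*(A0-B0)" using C by simp
    then show ?thesis by simp
  qed
  note cf = chan_facts[OF ch]
  have YZ: "Pc_YZ p a b n W = (\<Sum>z<n. max (W 0 z * (A0+B0)) (W 1 z * (A1+B1)))"
    unfolding PcYZ_eq A0_def A1_def B0_def B1_def by (simp add: algebra_simps)
  have XZ: "Pc_XZ p a b n W = (\<Sum>z<n. max (A0 * W 0 z + A1 * W 1 z) (B0 * W 0 z + B1 * W 1 z))"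
    unfolding PcXZ_eq A0_def A1_def B0_def B1_def by (simp add: algebra_simps)
  have "(B1-A1) * Pc_YZ p a b n W = (\<Sum>z<n. (B1-A1) * max (W 0 z * (A0+B0)) (W 1 z * (A1+B1)))"
    unfolding YZ by (simp add: sum_distrib_left)
  also have "\<dots> \<le> (\<Sum>z<n. (A1+B1) * max (A0 * W 0 z + A1 * W 1 z) (B0 * W 0 z + B1 * W 1 z)
           + ((B1-A1)*(A0+B0) - (A1+B1)*A0) * W 0 z - (A1+B1)*A1 * W 1 z)"
    by (intro sum_mono pt1 nn D K cf) auto
  also have "\<dots> = (A1+B1) * Pc_XZ p a b n W + ((B1-A1)*(A0+B0) - (A1+B1)*A0) * (\<Sum>z<n. W 0 z)
         - (A1+B1)*A1 * (\<Sum>z<n. W 1 z)"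
    unfolding XZ by (simp add: sum.distrib sum_subtractf sum_distrib_left)
  also have "\<dots> \<le> (A1+B1) * e + ((B1-A1)*(A0+B0) - (A1+B1)*A0) - (A1+B1)*A1"
    using X nn cf by (simp add: mult_left_mono)
  finally have M: "(B1-A1) * Pc_YZ p a b n W \<le> (A1+B1) * e + ((B1-A1)*(A0+B0) - (A1+B1)*A0) - (A1+B1)*A1" .
  have eq: "(1 - a) * (1 - p) + (1 - b) * p = A0 + B1" "(1 - b) * p - a * (1 - p) = B1 - A1"
    "a * (1 - p) + (1 - b) * p = A1 + B1"
    unfolding A0_def A1_def B0_def B1_def by (simp_all add: algebra_simps)
  have sum1: "A0 + A1 + B0 + B1 = 1" unfolding A0_def A1_def B0_def B1_def by (simp add: algebra_simps)
  have "Pc_YZ p a b n W \<le> ((A1+B1) * e + ((B1-A1)*(A0+B0) - (A1+B1)*A0) - (A1+B1)*A1) / (B1-A1)"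
    using M D by (simp add: field_simps)
  also have "\<dots> = 1 - (A0 + B1 - e) / (B1 - A1) * (A1 + B1)"
  proof -
    have A0e: "A0 = 1 - A1 - B0 - B1" using sum1 by linarith
    show ?thesis using D unfolding A0e by (simp add: field_simps)
  qed
  finally show ?thesis unfolding eq .
qed


lemma ub2:
  fixes p a b e :: real
  assumes "1/2 \<le> p" "p < 1" "0 \<le> a" "a < 1/2" "0 \<le> b" "b < 1/2"
    and G: "(1 - a) * (1 - p) > b * p"
    and C: "\<not> a * (1 - a) * (1 - p)^2 < b * (1 - b) * p^2"
    and ch: "is_channel n W" and X: "Pc_XZ p a b n W \<le> e"
  shows "Pc_YZ p a b n W \<le> 1 - ((1 - a) * (1 - p) + (1 - b) * p - e) / ((1 - a) * (1 - p) - b * p) * (1 - (a * (1 - p) + (1 - b) * p))"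
proof -
  define A0 where "A0 = (1-p)*(1-a)"
  define A1 where "A1 = (1-p)*a"
  define B0 where "B0 = p*b"
  define B1 where "B1 = p*(1-b)"
  have nn: "0 \<le> A0" "0 \<le> A1" "0 \<le> B0" "0 \<le> B1" using assms unfolding A0_def A1_def B0_def B1_def by auto
  have D: "B0 < A0" using G unfolding A0_def B0_def by (simp add: algebra_simps)
  have K: "(A0+B0)*(B1-A1) \<le> (A0-B0)*(A1+B1)"
  proof -
    have "(A0-B0)*(A1+B1) - (A0+B0)*(B1-A1) = 2*(A0*A1 - B0*B1)" by (simp add: algebra_simps)
    moreover have "A0*A1 = a * (1 - a) * (1 - p)^2" "B0*B1 = b * (1 - b) * p^2"
      unfolding A0_def A1_def B0_def B1_def by (simp_all add: power2_eq_square algebra_simps)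
    ultimately have "0 \<le> (A0-B0)*(A1+B1) - (A0+B0)*(B1-A1)" using C by simp
    then show ?thesis by simp
  qed
  note cf = chan_facts[OF ch]
  have YZ: "Pc_YZ p a b n W = (\<Sum>z<n. max (W 0 z * (A0+B0)) (W 1 z * (A1+B1)))"
    unfolding PcYZ_eq A0_def A1_def B0_def B1_def by (simp add: algebra_simps)
  have XZ: "Pc_XZ p a b n W = (\<Sum>z<n. max (A0 * W 0 z + A1 * W 1 z) (B0 * W 0 z + B1 * W 1 z))"
    unfolding PcXZ_eq A0_def A1_def B0_def B1_def by (simp add: algebra_simps)
  have "(A0-B0) * Pc_YZ p a b n W = (\<Sum>z<n. (A0-B0) * max (W 0 z * (A0+B0)) (W 1 z * (A1+B1)))"
    unfolding YZ by (simp add: sum_distrib_left)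
  also have "\<dots> \<le> (\<Sum>z<n. (A0+B0) * max (A0 * W 0 z + A1 * W 1 z) (B0 * W 0 z + B1 * W 1 z)
           - (A0+B0)*B0 * W 0 z + ((A0-B0)*(A1+B1) - (A0+B0)*B1) * W 1 z)"
    by (intro sum_mono pt2 nn D K cf) auto
  also have "\<dots> = (A0+B0) * Pc_XZ p a b n W - (A0+B0)*B0 * (\<Sum>z<n. W 0 z)
         + ((A0-B0)*(A1+B1) - (A0+B0)*B1) * (\<Sum>z<n. W 1 z)"
    unfolding XZ by (simp add: sum.distrib sum_subtractf sum_distrib_left)
  also have "\<dots> \<le> (A0+B0) * e - (A0+B0)*B0 + ((A0-B0)*(A1+B1) - (A0+B0)*B1)"
    using X nn cf by (simp add: mult_left_mono)
  finally have M: "(A0-B0) * Pc_YZ p a b n W \<le> (A0+B0) * e - (A0+B0)*B0 + ((A0-B0)*(A1+B1) - (A0+B0)*B1)" .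
  have eq: "(1 - a) * (1 - p) + (1 - b) * p = A0 + B1" "(1 - a) * (1 - p) - b * p = A0 - B0"
    "1 - (a * (1 - p) + (1 - b) * p) = A0 + B0"
    unfolding A0_def A1_def B0_def B1_def by (simp_all add: algebra_simps)
  have sum1: "A0 + A1 + B0 + B1 = 1" unfolding A0_def A1_def B0_def B1_def by (simp add: algebra_simps)
  have "Pc_YZ p a b n W \<le> ((A0+B0) * e - (A0+B0)*B0 + ((A0-B0)*(A1+B1) - (A0+B0)*B1)) / (A0-B0)"
    using M D by (simp add: field_simps)
  also have "\<dots> = 1 - (A0 + B1 - e) / (A0 - B0) * (A0 + B0)"
  proof -
    have A1e: "A1 = 1 - A0 - B0 - B1" using sum1 by linarith
    show ?thesis using D unfolding A1e by (simp add: field_simps)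
  qed
  finally show ?thesis unfolding eq .
qed


lemma ach1:
  fixes p a b e :: real
  assumes H: "1/2 \<le> p" "p < 1" "0 \<le> a" "a < 1/2" "0 \<le> b" "b < 1/2"
    and G: "(1 - a) * (1 - p) > b * p"
    and C: "a * (1 - a) * (1 - p)^2 < b * (1 - b) * p^2"
    and E: "p \<le> e" "e \<le> (1 - a) * (1 - p) + (1 - b) * p"
    and zd: "\<zeta> = ((1 - a) * (1 - p) + (1 - b) * p - e) / ((1 - b) * p - a * (1 - p))"
    and Wd: "W = (\<lambda>y z. if y = 0 then (if z = 0 then 1 else 0)
                     else (if z = 0 then \<zeta> else 1 - \<zeta>))"
  shows "hfun p a b e = 1 - \<zeta> * (a * (1 - p) + (1 - b) * p)
              \<and> is_channel 2 W \<and> Pc_XZ p a b 2 W \<le> e \<and> Pc_YZ p a b 2 W = hfun p a b e"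
proof -
  define A0 where "A0 = (1-p)*(1-a)"
  define A1 where "A1 = (1-p)*a"
  define B0 where "B0 = p*b"
  define B1 where "B1 = p*(1-b)"
  have nn: "0 \<le> A0" "0 \<le> A1" "0 \<le> B0" "0 \<le> B1" using H unfolding A0_def A1_def B0_def B1_def by auto
  have A1a: "A1 \<le> 1/4"
  proof -
    have "(1-p)*a \<le> (1/2)*(1/2)" using H by (intro mult_mono) auto
    then show ?thesis unfolding A1_def by simp
  qed
  have B1a: "B1 > 1/4"
  proof -
    have "(1/2)*(1/2) < p*(1-b)" using H by (intro mult_le_less_imp_less) auto
    then show ?thesis unfolding B1_def by simp
  qed
  have D: "A1 < B1" using A1a B1a by linarith
  have D0: "B0 < A0" using G unfolding A0_def B0_def by (simp add: algebra_simps)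
  have K: "(A1+B1)*(A0-B0) \<le> (B1-A1)*(A0+B0)"
  proof -
    have "(B1-A1)*(A0+B0) - (A1+B1)*(A0-B0) = 2*(B0*B1 - A0*A1)" by (simp add: algebra_simps)
    moreover have "A0*A1 = a * (1 - a) * (1 - p)^2" "B0*B1 = b * (1 - b) * p^2"
      unfolding A0_def A1_def B0_def B1_def by (simp_all add: power2_eq_square algebra_simps)
    ultimately have "0 \<le> (B1-A1)*(A0+B0) - (A1+B1)*(A0-B0)" using C by simp
    then show ?thesis by simp
  qed
  have eq: "(1 - a) * (1 - p) + (1 - b) * p = A0 + B1" "(1 - b) * p - a * (1 - p) = B1 - A1"
    "a * (1 - p) + (1 - b) * p = A1 + B1"
    unfolding A0_def A1_def B0_def B1_def by (simp_all add: algebra_simps)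
  have pe: "p = B0 + B1" unfolding B0_def B1_def by (simp add: algebra_simps)
  have sum1: "A0 + A1 + B0 + B1 = 1" unfolding A0_def A1_def B0_def B1_def by (simp add: algebra_simps)
  have p2': "B1 - A1 - (A0-B0) = 2*p - 1" unfolding A0_def A1_def B0_def B1_def by (simp add: algebra_simps)
  have p2: "A0 - B0 \<le> B1 - A1" using H(1) p2' by linarith
  have ze: "\<zeta> = (A0+B1-e)/(B1-A1)" unfolding zd eq ..
  have z1: "\<zeta>*(B1-A1) = A0+B1-e" unfolding ze using D by simp
  have z0: "0 \<le> \<zeta>" unfolding ze using D E eq by simp
  have z2: "\<zeta>*(B1-A1) \<le> A0-B0" using z1 E eq pe by linarith
  have zle: "\<zeta> \<le> 1"
  proof -
    have "\<zeta>*(B1-A1) \<le> 1*(B1-A1)" using z2 p2 by simp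
    then show ?thesis using D by (simp add: mult_le_cancel_right)
  qed
  have zq: "\<zeta>*(A1+B1) \<le> A0+B0"
  proof -
    have "\<zeta>*(B1-A1)*(A1+B1) \<le> (A0-B0)*(A1+B1)" using z2 nn by (intro mult_right_mono) auto
    also have "\<dots> \<le> (B1-A1)*(A0+B0)" using K by (simp add: algebra_simps)
    finally have "(B1-A1)*(\<zeta>*(A1+B1)) \<le> (B1-A1)*(A0+B0)" by (simp add: algebra_simps)
    then show ?thesis using D by simp
  qed
  have zx: "B0 + B1*\<zeta> \<le> A0 + A1*\<zeta>" using z2 by (simp add: algebra_simps)
  have ch: "is_channel 2 W" unfolding is_channel_def Wd using z0 zle
    by (auto simp: numeral_2_eq_2 lessThan_Suc)
  have two: "{..<2::nat} = {0,1}" by auto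
  have XZ: "Pc_XZ p a b 2 W = e"
  proof -
    have "Pc_XZ p a b 2 W = max (A0 + A1*\<zeta>) (B0 + B1*\<zeta>) + max (A1*(1-\<zeta>)) (B1*(1-\<zeta>))"
      unfolding PcXZ_eq two Wd A0_def A1_def B0_def B1_def by simp
    also have "\<dots> = A0 + A1*\<zeta> + B1*(1-\<zeta>)"
      using zx D zle by (simp add: max_def mult_right_mono)
    also have "\<dots> = e" using z1 by (simp add: algebra_simps)
    finally show ?thesis .
  qed
  have YZ: "Pc_YZ p a b 2 W = 1 - \<zeta> * (A1+B1)"
  proof -
    have "Pc_YZ p a b 2 W = max (A0+B0) (\<zeta>*(A1+B1)) + max 0 ((1-\<zeta>)*(A1+B1))"
      unfolding PcYZ_eq two Wd A0_def A1_def B0_def B1_def by simp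
    also have "\<dots> = A0+B0 + (1-\<zeta>)*(A1+B1)"
      using zq zle nn by (simp add: max_def)
    also have "\<dots> = 1 - \<zeta> * (A1+B1)" using sum1 by (simp add: algebra_simps)
    finally show ?thesis .
  qed
  have hf: "hfun p a b e = 1 - \<zeta> * (A1+B1)"
    unfolding hfun_def
  proof (rule cSup_eq_maximum)
    show "1 - \<zeta> * (A1 + B1) \<in> {Pc_YZ p a b n W |n W. is_channel n W \<and> Pc_XZ p a b n W \<le> e}"
      using ch XZ YZ by force
  next
    fix x assume "x \<in> {Pc_YZ p a b n W |n W. is_channel n W \<and> Pc_XZ p a b n W \<le> e}"
    then obtain n V where "x = Pc_YZ p a b n V" "is_channel n V" "Pc_XZ p a b n V \<le> e" by blast
    then show "x \<le> 1 - \<zeta> * (A1 + B1)"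
      using ub1[OF H G C, of n V e] unfolding eq ze[symmetric] by simp
  qed
  show ?thesis using hf ch XZ YZ unfolding eq by simp
qed


lemma ach2:
  fixes p a b e :: real
  assumes H: "1/2 \<le> p" "p < 1" "0 \<le> a" "a < 1/2" "0 \<le> b" "b < 1/2"
    and G: "(1 - a) * (1 - p) > b * p"
    and C: "\<not> a * (1 - a) * (1 - p)^2 < b * (1 - b) * p^2"
    and E: "p \<le> e" "e \<le> (1 - a) * (1 - p) + (1 - b) * p"
    and zd: "\<zeta> = ((1 - a) * (1 - p) + (1 - b) * p - e) / ((1 - a) * (1 - p) - b * p)"
    and Wd: "W = (\<lambda>y z. if y = 0 then (if z = 0 then 1 - \<zeta> else \<zeta>)
                      else (if z = 0 then 0 else 1))"
  shows "hfun p a b e = 1 - \<zeta> * (1 - (a * (1 - p) + (1 - b) * p))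
              \<and> is_channel 2 W \<and> Pc_XZ p a b 2 W \<le> e \<and> Pc_YZ p a b 2 W = hfun p a b e"
proof -
  define A0 where "A0 = (1-p)*(1-a)"
  define A1 where "A1 = (1-p)*a"
  define B0 where "B0 = p*b"
  define B1 where "B1 = p*(1-b)"
  have nn: "0 \<le> A0" "0 \<le> A1" "0 \<le> B0" "0 \<le> B1" using H unfolding A0_def A1_def B0_def B1_def by auto
  have D0: "B0 < A0" using G unfolding A0_def B0_def by (simp add: algebra_simps)
  have K: "(A0+B0)*(B1-A1) \<le> (A0-B0)*(A1+B1)"
  proof -
    have "(A0-B0)*(A1+B1) - (A0+B0)*(B1-A1) = 2*(A0*A1 - B0*B1)" by (simp add: algebra_simps)
    moreover have "A0*A1 = a * (1 - a) * (1 - p)^2" "B0*B1 = b * (1 - b) * p^2"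
      unfolding A0_def A1_def B0_def B1_def by (simp_all add: power2_eq_square algebra_simps)
    ultimately have "0 \<le> (A0-B0)*(A1+B1) - (A0+B0)*(B1-A1)" using C by simp
    then show ?thesis by simp
  qed
  have eq: "(1 - a) * (1 - p) + (1 - b) * p = A0 + B1" "(1 - a) * (1 - p) - b * p = A0 - B0"
    "1 - (a * (1 - p) + (1 - b) * p) = A0 + B0"
    unfolding A0_def A1_def B0_def B1_def by (simp_all add: algebra_simps)
  have pe: "p = B0 + B1" unfolding B0_def B1_def by (simp add: algebra_simps)
  have sum1: "A0 + A1 + B0 + B1 = 1" unfolding A0_def A1_def B0_def B1_def by (simp add: algebra_simps)
  have p2': "B1 - A1 - (A0-B0) = 2*p - 1" unfolding A0_def A1_def B0_def B1_def by (simp add: algebra_simps)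
  have p2: "A0 - B0 \<le> B1 - A1" using H(1) p2' by linarith
  have ze: "\<zeta> = (A0+B1-e)/(A0-B0)" unfolding zd eq ..
  have z1: "\<zeta>*(A0-B0) = A0+B1-e" unfolding ze using D0 by simp
  have z0: "0 \<le> \<zeta>" unfolding ze using D0 E eq by simp
  have z2: "\<zeta>*(A0-B0) \<le> A0-B0" using z1 E eq pe by linarith
  have zle: "\<zeta> \<le> 1"
  proof -
    have "\<zeta>*(A0-B0) \<le> 1*(A0-B0)" using z2 by simp
    then show ?thesis using D0 by (simp add: mult_le_cancel_right)
  qed
  have zq: "\<zeta>*(A0+B0) \<le> A1+B1"
  proof -
    have "\<zeta>*(A0-B0)*(A0+B0) \<le> (B1-A1)*(A0+B0)" using z2 p2 nn by (intro mult_right_mono) auto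
    also have "\<dots> \<le> (A0-B0)*(A1+B1)" using K by (simp add: algebra_simps)
    finally have "(A0-B0)*(\<zeta>*(A0+B0)) \<le> (A0-B0)*(A1+B1)" by (simp add: algebra_simps)
    then show ?thesis using D0 by simp
  qed
  have zx: "\<zeta>*A0 + A1 \<le> \<zeta>*B0 + B1" using z2 p2 by (simp add: algebra_simps)
  have ch: "is_channel 2 W" unfolding is_channel_def Wd using z0 zle
    by (auto simp: numeral_2_eq_2 lessThan_Suc)
  have two: "{..<2::nat} = {0,1}" by auto
  have XZ: "Pc_XZ p a b 2 W = e"
  proof -
    have "Pc_XZ p a b 2 W = max (A0*(1-\<zeta>)) (B0*(1-\<zeta>)) + max (A0*\<zeta> + A1) (B0*\<zeta> + B1)"
      unfolding PcXZ_eq two Wd A0_def A1_def B0_def B1_def by simp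
    also have "\<dots> = A0*(1-\<zeta>) + (B0*\<zeta> + B1)" (is "?l = ?r")
    proof -
      have "B0*(1-\<zeta>) \<le> A0*(1-\<zeta>)" using D0 zle by (intro mult_right_mono) auto
      then show "?l = ?r" using zx by (simp add: max_def algebra_simps)
    qed
    also have "\<dots> = e" using z1 by (simp add: algebra_simps)
    finally show ?thesis .
  qed
  have YZ: "Pc_YZ p a b 2 W = 1 - \<zeta> * (A0+B0)"
  proof -
    have "Pc_YZ p a b 2 W = max ((1-\<zeta>)*(A0+B0)) 0 + max (\<zeta>*(A0+B0)) (A1+B1)"
      unfolding PcYZ_eq two Wd A0_def A1_def B0_def B1_def by simp
    also have "\<dots> = (1-\<zeta>)*(A0+B0) + (A1+B1)"
    proof -
      have "0 \<le> (1-\<zeta>)*(A0+B0)" using zle nn by simp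
      then show ?thesis using zq by (simp add: max_def)
    qed
    also have "\<dots> = 1 - \<zeta> * (A0+B0)" using sum1 by (simp add: algebra_simps)
    finally show ?thesis .
  qed
  have hf: "hfun p a b e = 1 - \<zeta> * (A0+B0)"
    unfolding hfun_def
  proof (rule cSup_eq_maximum)
    show "1 - \<zeta> * (A0 + B0) \<in> {Pc_YZ p a b n W |n W. is_channel n W \<and> Pc_XZ p a b n W \<le> e}"
      using ch XZ YZ by force
  next
    fix x assume "x \<in> {Pc_YZ p a b n W |n W. is_channel n W \<and> Pc_XZ p a b n W \<le> e}"
    then obtain n V where "x = Pc_YZ p a b n V" "is_channel n V" "Pc_XZ p a b n V \<le> e" by blast
    then show "x \<le> 1 - \<zeta> * (A0 + B0)"
      using ub2[OF H G C, of n V e] unfolding eq ze[symmetric] by simp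
  qed
  show ?thesis using hf ch XZ YZ unfolding eq by simp
qed

theorem theorem2:
  fixes p \<alpha> \<beta> \<epsilon> :: real
  assumes "1/2 \<le> p" "p < 1"
    and "0 \<le> \<alpha>" "\<alpha> < 1/2" "0 \<le> \<beta>" "\<beta> < 1/2"
    and "(1 - \<alpha>) * (1 - p) > \<beta> * p"
    and "p \<le> \<epsilon>" "\<epsilon> \<le> (1 - \<alpha>) * (1 - p) + (1 - \<beta>) * p"
  shows
    "let q = \<alpha> * (1 - p) + (1 - \<beta>) * p;
         \<zeta> = ((1 - \<alpha>) * (1 - p) + (1 - \<beta>) * p - \<epsilon>) / ((1 - \<beta>) * p - \<alpha> * (1 - p));
         \<zeta>' = ((1 - \<alpha>) * (1 - p) + (1 - \<beta>) * p - \<epsilon>) / ((1 - \<alpha>) * (1 - p) - \<beta> * p);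
         W = (\<lambda>y z. if y = 0 then (if z = 0 then 1 else 0)
                     else (if z = 0 then \<zeta> else 1 - \<zeta>));
         W' = (\<lambda>y z. if y = 0 then (if z = 0 then 1 - \<zeta>' else \<zeta>')
                      else (if z = 0 then 0 else 1))
     in (if \<alpha> * (1 - \<alpha>) * (1 - p)^2 < \<beta> * (1 - \<beta>) * p^2
         then hfun p \<alpha> \<beta> \<epsilon> = 1 - \<zeta> * q
              \<and> is_channel 2 W \<and> Pc_XZ p \<alpha> \<beta> 2 W \<le> \<epsilon> \<and> Pc_YZ p \<alpha> \<beta> 2 W = hfun p \<alpha> \<beta> \<epsilon>
         else hfun p \<alpha> \<beta> \<epsilon> = 1 - \<zeta>' * (1 - q)
              \<and> is_channel 2 W' \<and> Pc_XZ p \<alpha> \<beta> 2 W' \<le> \<epsilon> \<and> Pc_YZ p \<alpha> \<beta> 2 W' = hfun p \<alpha> \<beta> \<epsilon>)"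
proof (cases "\<alpha> * (1 - \<alpha>) * (1 - p)^2 < \<beta> * (1 - \<beta>) * p^2")
  case True
  show ?thesis unfolding Let_def if_P[OF True] by (rule ach1[OF assms(1-7) True assms(8,9) refl refl])
next
  case False
  show ?thesis unfolding Let_def if_not_P[OF False] by (rule ach2[OF assms(1-7) False assms(8,9) refl refl])
qed

end
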